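(* Let $V>0$, $r_d>0$, $k>\frac{1}{r_d}$ and $r_a=\sqrt{r_d^2-\frac{1}{k^2}}$. Consider the closed-loop system (on the region $r\ge r_a$) $$\dot r=-V\cos\theta,\qquad \dot\theta=k\left[V\cos\!\left(\pi-\sin^{-1}\!\left(\tfrac{r_a}{r}\right)\right)+V\cos\theta\right]+\frac{V\sin\theta}{r}.$$ Then $(r,\theta)=(r_d,\frac{\pi}{2})$ is a locally exponentially stable equilibrium of this system.
   Context: This system is the polar form ($r$ = distance from UAV to target, $\theta$ = bearing angle, i.e., the counterclockwise angle from the UAV-to-target vector to the heading) of unicycle dynamics $\dot x=V\cos\psi,\ \dot y=V\sin\psi,\ \dot\psi=\omega$ under the control $\omega=k[V\cos(\pi-\sin^{-1}(r_a/r))-\dot r]$ for $r\ge r_a$ (and $\omega=0$ for $r<r_a$), with $\dot r=-V\cos\theta$ substituted. $\sin^{-1}$ is the principal arcsine. *)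

theory Defs
  imports "HOL-Analysis.Analysis"
begin

definition cl_field :: "real \<Rightarrow> real \<Rightarrow> real \<Rightarrow> real \<times> real \<Rightarrow> real \<times> real" where
  "cl_field V k ra = (\<lambda>(r, \<theta>).
     (- V * cos \<theta>,
      (if r \<ge> ra then k * (V * cos (pi - arcsin (ra / r)) + V * cos \<theta>) else 0)
        + V * sin \<theta> / r))"

definition ode_solution :: "('a::real_normed_vector \<Rightarrow> 'a) \<Rightarrow> (real \<Rightarrow> 'a) \<Rightarrow> real set \<Rightarrow> bool" where
  "ode_solution f x S \<longleftrightarrow> (\<forall>t\<in>S. (x has_vector_derivative f (x t)) (at t within S))"

definition loc_exp_stable_eq :: "('a::real_normed_vector \<Rightarrow> 'a) \<Rightarrow> 'a \<Rightarrow> bool" where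
  "loc_exp_stable_eq f p \<longleftrightarrow> f p = 0 \<and>
     (\<exists>\<delta>>0. \<exists>c>0. \<exists>lam>0. \<forall>x0. norm (x0 - p) < \<delta> \<longrightarrow>
        (\<exists>x. x 0 = x0 \<and> ode_solution f x {0..}) \<and>
        (\<forall>x. x 0 = x0 \<and> ode_solution f x {0..} \<longrightarrow>
           (\<forall>t\<ge>0. norm (x t - p) \<le> c * norm (x0 - p) * exp (- lam * t))))"

end

theory Submission
  imports Defs
begin

fun pic :: "(real\<times>real \<Rightarrow> real\<times>real) \<Rightarrow> real\<times>real \<Rightarrow> nat \<Rightarrow> real \<Rightarrow> real\<times>real" where
  "pic G x0 0 t = x0"
| "pic G x0 (Suc n) t = x0 + integral {0..t} (\<lambda>s. G (pic G x0 n s))"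

lemma lip_cont:
  fixes f :: "real \<Rightarrow> real\<times>real"
  assumes "M \<ge> 0" "\<And>s t. 0 \<le> s \<Longrightarrow> s \<le> t \<Longrightarrow> norm (f t - f s) \<le> M * (t - s)"
  shows "continuous_on {0..} f"
proof -
  have "M-lipschitz_on {0..} f"
  proof (rule lipschitz_onI)
    fix x y :: real assume "x \<in> {0..}" "y \<in> {0..}"
    then show "dist (f x) (f y) \<le> M * dist x y"
      using assms(2)[of x y] assms(2)[of y x]
      by (cases "x \<le> y") (auto simp: dist_norm norm_minus_commute)
  qed fact
  then show ?thesis by (rule lipschitz_on_continuous_on)
qed

lemma gap_zero:
  fixes a b C :: real
  assumes "\<And>n::nat. a \<le> b + C / 2^n"
  shows "a \<le> b"
proof (rule ccontr)
  assume "\<not> a \<le> b"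
  then have d: "a - b > 0" by simp
  obtain n :: nat where "C / (a - b) < 2^n" using real_arch_pow[of 2 "C/(a-b)"] by auto
  then have "C < (a-b) * 2^n" using d by (simp add: field_simps)
  then have "C / 2^n < a - b" by (simp add: field_simps)
  with assms[of n] show False by simp
qed

lemma integral_exp:
  fixes L c t :: real
  assumes "L > 0" "t \<ge> 0"
  shows "integral {0..t} (\<lambda>s. c * exp (2 * L * s)) = c * (exp (2 * L * t) - 1) / (2*L)"
proof -
  have "((\<lambda>s. c * exp (2 * L * s)) has_integral ((\<lambda>s. c * exp (2 * L * s) / (2*L)) t - (\<lambda>s. c * exp (2 * L * s) / (2*L)) 0)) {0..t}"
  proof (rule fundamental_theorem_of_calculus[OF assms(2)])
    fix x assume "x \<in> {0..t}"
    have "((\<lambda>s. c * exp (2 * L * s) / (2*L)) has_real_derivative c * exp (2 * L * x)) (at x within {0..t})"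
      using assms by (auto intro!: derivative_eq_intros)
    then show "((\<lambda>s. c * exp (2 * L * s) / (2*L)) has_vector_derivative c * exp (2 * L * x)) (at x within {0..t})"
      by (simp add: has_real_derivative_iff_has_vector_derivative)
  qed
  from integral_unique[OF this] show ?thesis by (simp add: diff_divide_distrib right_diff_distrib)
qed

lemma picard:
  fixes G :: "real\<times>real \<Rightarrow> real\<times>real" and x0 :: "real\<times>real"
  assumes Lpos: "L > 0" and Lip: "\<And>x y. norm (G x - G y) \<le> L * norm (x - y)"
    and Mb: "\<And>x. norm (G x) \<le> M"
  shows "\<exists>X. X 0 = x0 \<and> (\<forall>t\<in>{0..}. (X has_vector_derivative G (X t)) (at t within {0..}))"
proof -
  have M0: "M \<ge> 0" using Mb[of 0] norm_ge_zero[of "G 0"] by linarith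
  have Gc: "continuous_on UNIV G"
  proof -
    have "L-lipschitz_on UNIV G" by (rule lipschitz_onI) (use Lip Lpos in \<open>auto simp: dist_norm\<close>)
    then show ?thesis by (rule lipschitz_on_continuous_on)
  qed
  have cgen: "continuous_on {a..b} (\<lambda>s. G (f s))" if "continuous_on {0..} f" "0 \<le> a" for f :: "real \<Rightarrow> real\<times>real" and a b
  proof -
    have "continuous_on {0..} (\<lambda>s. G (f s))"
      by (rule continuous_on_compose2[OF Gc that(1)]) auto
    then show ?thesis by (rule continuous_on_subset) (use that in auto)
  qed
  have lipn: "\<And>s t. 0 \<le> s \<Longrightarrow> s \<le> t \<Longrightarrow> norm (pic G x0 n t - pic G x0 n s) \<le> M * (t - s)" for n
  proof (induction n)
    case 0 then show ?case using M0 by simp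
  next
    case (Suc n)
    have c: "continuous_on {0..} (pic G x0 n)" by (rule lip_cont[OF M0 Suc.IH])
    have cgt: "continuous_on {s..t} (\<lambda>s. G (pic G x0 n s))" using cgen[OF c] Suc.prems by auto
    have int: "(\<lambda>s. G (pic G x0 n s)) integrable_on {0..t}"
      by (rule integrable_continuous_interval, rule cgen[OF c]) simp
    have "integral {0..s} (\<lambda>s. G (pic G x0 n s)) + integral {s..t} (\<lambda>s. G (pic G x0 n s)) = integral {0..t} (\<lambda>s. G (pic G x0 n s))"
      by (rule Henstock_Kurzweil_Integration.integral_combine[OF Suc.prems int])
    then have "pic G x0 (Suc n) t - pic G x0 (Suc n) s = integral {s..t} (\<lambda>s. G (pic G x0 n s))"
      by (simp add: algebra_simps)
    also have "norm \<dots> \<le> M * (t - s)"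
      using integral_bound[OF Suc.prems(2) cgt, of M] Mb by auto
    finally show ?case .
  qed
  have contn: "continuous_on {0..} (pic G x0 n)" for n by (rule lip_cont[OF M0 lipn])
  define K where "K = M / L"
  have K0: "K \<ge> 0" using M0 Lpos by (simp add: K_def)
  have diffb: "\<And>t. 0 \<le> t \<Longrightarrow> norm (pic G x0 (Suc n) t - pic G x0 n t) \<le> K * exp (2 * L * t) / 2 ^ Suc n" for n
  proof (induction n)
    case 0
    have "norm (pic G x0 (Suc 0) t - pic G x0 0 t) = norm (integral {0..t} (\<lambda>s. G x0))" by simp
    also have "\<dots> \<le> M * (t - 0)"
      by (rule integral_bound) (use 0 Mb in auto)
    also have "\<dots> \<le> K * exp (2 * L * t) / 2 ^ Suc 0"
    proof -
      have "2 * L * t \<le> exp (2 * L * t)" using exp_ge_add_one_self[of "2 * L * t"] by linarith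
      then have "K * (2 * L * t) \<le> K * exp (2 * L * t)" using K0 by (rule mult_left_mono)
      then show ?thesis using Lpos by (simp add: K_def field_simps)
    qed
    finally show ?case .
  next
    case (Suc n)
    have i1: "(\<lambda>s. G (pic G x0 (Suc n) s)) integrable_on {0..t}"
      by (rule integrable_continuous_interval, rule cgen[OF contn]) simp
    have i0: "(\<lambda>s. G (pic G x0 n s)) integrable_on {0..t}"
      by (rule integrable_continuous_interval, rule cgen[OF contn]) simp
    have "pic G x0 (Suc (Suc n)) t - pic G x0 (Suc n) t
        = integral {0..t} (\<lambda>s. G (pic G x0 (Suc n) s) - G (pic G x0 n s))"
      using integral_diff[OF i1 i0] by simp
    also have "norm \<dots> \<le> integral {0..t} (\<lambda>s. (L * K / 2 ^ Suc n) * exp (2 * L * s))"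
    proof (rule integral_norm_bound_integral)
      show "(\<lambda>s. G (pic G x0 (Suc n) s) - G (pic G x0 n s)) integrable_on {0..t}"
        using i1 i0 by (rule integrable_diff)
      show "(\<lambda>s. (L * K / 2 ^ Suc n) * exp (2 * L * s)) integrable_on {0..t}"
        by (rule integrable_continuous_interval) (auto intro!: continuous_intros)
      fix s assume s: "s \<in> {0..t}"
      have "norm (G (pic G x0 (Suc n) s) - G (pic G x0 n s)) \<le> L * norm (pic G x0 (Suc n) s - pic G x0 n s)"
        by (rule Lip)
      also have "\<dots> \<le> L * (K * exp (2 * L * s) / 2 ^ Suc n)"
        using Suc.IH[of s] s Lpos by (intro mult_left_mono) auto
      finally show "norm (G (pic G x0 (Suc n) s) - G (pic G x0 n s)) \<le> (L * K / 2 ^ Suc n) * exp (2 * L * s)"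
        by simp
    qed
    also have "\<dots> = (L * K / 2 ^ Suc n) * (exp (2 * L * t) - 1) / (2 * L)"
      by (rule integral_exp[OF Lpos Suc.prems])
    also have "\<dots> \<le> K * exp (2 * L * t) / 2 ^ Suc (Suc n)"
      using Lpos K0 by (simp add: field_simps)
    finally show ?case .
  qed
  have cauchy: "norm (pic G x0 (n + j) t - pic G x0 n t) \<le> K * exp (2 * L * t) * (1 / 2 ^ n - 1 / 2 ^ (n + j))"
    if "t \<ge> 0" for n j t
  proof (induction j)
    case 0 then show ?case by simp
  next
    case (Suc j)
    have "norm (pic G x0 (n + Suc j) t - pic G x0 n t)
        \<le> norm (pic G x0 (Suc (n + j)) t - pic G x0 (n + j) t) + norm (pic G x0 (n + j) t - pic G x0 n t)"
      using norm_triangle_ineq[of "pic G x0 (Suc (n + j)) t - pic G x0 (n + j) t" "pic G x0 (n + j) t - pic G x0 n t"]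
      by simp
    also have "\<dots> \<le> K * exp (2 * L * t) / 2 ^ Suc (n + j) + K * exp (2 * L * t) * (1 / 2 ^ n - 1 / 2 ^ (n + j))"
      using diffb[OF that, of "n + j"] Suc.IH by linarith
    also have "\<dots> = K * exp (2 * L * t) * (1 / 2 ^ n - 1 / 2 ^ (n + Suc j))"
      by (simp add: field_simps)
    finally show ?case .
  qed
  have cb: "norm (pic G x0 m t - pic G x0 n t) \<le> K * exp (2 * L * t) / 2 ^ n" if "t \<ge> 0" "m \<ge> n" for n m t
  proof -
    have "norm (pic G x0 (n + (m - n)) t - pic G x0 n t) \<le> K * exp (2 * L * t) * (1 / 2 ^ n - 1 / 2 ^ (n + (m - n)))"
      by (rule cauchy[OF that(1)])
    also have "\<dots> \<le> K * exp (2 * L * t) * (1 / 2 ^ n)"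
      using K0 by (intro mult_left_mono) auto
    finally show ?thesis using that by simp
  qed
  have conv: "convergent (\<lambda>n. pic G x0 n t)" if "t \<ge> 0" for t
  proof -
    have "Cauchy (\<lambda>n. pic G x0 n t)"
    proof (rule metric_CauchyI)
      fix e :: real assume e: "e > 0"
      obtain N :: nat where N: "2 * K * exp (2 * L * t) / e < 2 ^ N" using real_arch_pow[of 2] by auto
      have N': "2 * K * exp (2 * L * t) / 2 ^ N < e" using N e by (simp add: field_simps)
      show "\<exists>N. \<forall>m\<ge>N. \<forall>n\<ge>N. dist (pic G x0 m t) (pic G x0 n t) < e"
      proof (intro exI allI impI)
        fix m n assume "m \<ge> N" "n \<ge> N"
        have "dist (pic G x0 m t) (pic G x0 n t) \<le> norm (pic G x0 m t - pic G x0 N t) + norm (pic G x0 n t - pic G x0 N t)"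
          using dist_triangle2[of "pic G x0 m t" "pic G x0 n t" "pic G x0 N t"] by (simp add: dist_norm)
        also have "\<dots> \<le> K * exp (2 * L * t) / 2 ^ N + K * exp (2 * L * t) / 2 ^ N"
          using cb[OF that \<open>m \<ge> N\<close>] cb[OF that \<open>n \<ge> N\<close>] by linarith
        finally show "dist (pic G x0 m t) (pic G x0 n t) < e" using N' by simp
      qed
    qed
    then show ?thesis by (simp add: Cauchy_convergent_iff)
  qed
  define X where "X t = lim (\<lambda>n. pic G x0 n t)" for t
  have lim: "(\<lambda>n. pic G x0 n t) \<longlonglongrightarrow> X t" if "t \<ge> 0" for t
    using conv[OF that] by (simp add: X_def convergent_LIMSEQ_iff)
  have Xb: "norm (X t - pic G x0 n t) \<le> K * exp (2 * L * t) / 2 ^ n" if "t \<ge> 0" for t n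
  proof (rule LIMSEQ_le_const2)
    show "(\<lambda>m. norm (pic G x0 m t - pic G x0 n t)) \<longlonglongrightarrow> norm (X t - pic G x0 n t)"
      by (intro tendsto_intros lim that)
    show "\<exists>N. \<forall>m\<ge>N. norm (pic G x0 m t - pic G x0 n t) \<le> K * exp (2 * L * t) / 2 ^ n"
      using cb[OF that] by blast
  qed
  have Xlip: "norm (X t - X s) \<le> M * (t - s)" if "0 \<le> s" "s \<le> t" for s t
  proof (rule gap_zero)
    fix n :: nat
    have es: "exp (2 * L * s) \<le> exp (2 * L * t)" using that Lpos by simp
    have e: "X t - X s = ((X t - pic G x0 n t) + (pic G x0 n t - pic G x0 n s)) - (X s - pic G x0 n s)" by simp
    have "norm (X t - X s) \<le> norm ((X t - pic G x0 n t) + (pic G x0 n t - pic G x0 n s)) + norm (X s - pic G x0 n s)"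
      unfolding e by (rule norm_triangle_ineq4)
    also have "\<dots> \<le> (norm (X t - pic G x0 n t) + norm (pic G x0 n t - pic G x0 n s)) + norm (X s - pic G x0 n s)"
      by (intro add_right_mono norm_triangle_ineq)
    also have "\<dots> \<le> (K * exp (2 * L * t) / 2 ^ n + M * (t - s)) + K * exp (2 * L * t) / 2 ^ n"
    proof (intro add_mono)
      show "norm (X t - pic G x0 n t) \<le> K * exp (2 * L * t) / 2 ^ n" using Xb[of t n] that by simp
      show "norm (pic G x0 n t - pic G x0 n s) \<le> M * (t - s)" by (rule lipn[OF that])
      have "norm (X s - pic G x0 n s) \<le> K * exp (2 * L * s) / 2 ^ n" using Xb[of s n] that by simp
      also have "\<dots> \<le> K * exp (2 * L * t) / 2 ^ n"
        by (intro divide_right_mono mult_left_mono es K0) simp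
      finally show "norm (X s - pic G x0 n s) \<le> K * exp (2 * L * t) / 2 ^ n" .
    qed
    finally show "norm (X t - X s) \<le> M * (t - s) + (2 * K * exp (2 * L * t)) / 2 ^ n" by simp
  qed
  have Xc: "continuous_on {0..} X" by (rule lip_cont[OF M0 Xlip])
  have Xeq: "X t = x0 + integral {0..t} (\<lambda>s. G (X s))" if t0: "t \<ge> 0" for t
  proof -
    have "norm (X t - (x0 + integral {0..t} (\<lambda>s. G (X s)))) \<le> 0"
    proof (rule gap_zero)
      fix n :: nat
      have iX: "(\<lambda>s. G (X s)) integrable_on {0..t}"
        by (rule integrable_continuous_interval, rule cgen[OF Xc]) simp
      have iP: "(\<lambda>s. G (pic G x0 n s)) integrable_on {0..t}"
        by (rule integrable_continuous_interval, rule cgen[OF contn]) simp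
      have "X t - (x0 + integral {0..t} (\<lambda>s. G (X s)))
          = (X t - pic G x0 (Suc n) t) + integral {0..t} (\<lambda>s. G (pic G x0 n s) - G (X s))"
        using integral_diff[OF iP iX] by simp
      also have "norm \<dots> \<le> norm (X t - pic G x0 (Suc n) t) + norm (integral {0..t} (\<lambda>s. G (pic G x0 n s) - G (X s)))"
        by (rule norm_triangle_ineq)
      also have "\<dots> \<le> K * exp (2 * L * t) / 2 ^ Suc n + (L * (K * exp (2 * L * t) / 2 ^ n)) * (t - 0)"
      proof (rule add_mono)
        show "norm (X t - pic G x0 (Suc n) t) \<le> K * exp (2 * L * t) / 2 ^ Suc n" by (rule Xb[OF t0])
        show "norm (integral {0..t} (\<lambda>s. G (pic G x0 n s) - G (X s))) \<le> (L * (K * exp (2 * L * t) / 2 ^ n)) * (t - 0)"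
        proof (rule integral_bound[OF t0])
          show "continuous_on {0..t} (\<lambda>s. G (pic G x0 n s) - G (X s))"
            by (intro continuous_on_diff cgen[OF contn] cgen[OF Xc]) simp_all
          fix s assume s: "s \<in> {0..t}"
          have "norm (G (pic G x0 n s) - G (X s)) \<le> L * norm (X s - pic G x0 n s)"
            using Lip[of "pic G x0 n s" "X s"] by (simp add: norm_minus_commute)
          also have "\<dots> \<le> L * (K * exp (2 * L * s) / 2 ^ n)"
            using Xb[of s n] s Lpos by (intro mult_left_mono) auto
          also have "\<dots> \<le> L * (K * exp (2 * L * t) / 2 ^ n)"
            using s Lpos K0 by (intro mult_left_mono divide_right_mono) auto
          finally show "norm (G (pic G x0 n s) - G (X s)) \<le> L * (K * exp (2 * L * t) / 2 ^ n)" .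
        qed
      qed
      also have "\<dots> \<le> 0 + (K * exp (2 * L * t) * (1 + L * t)) / 2 ^ n"
        using K0 Lpos t0 by (simp add: field_simps)
      finally show "norm (X t - (x0 + integral {0..t} (\<lambda>s. G (X s)))) \<le> 0 + (K * exp (2 * L * t) * (1 + L * t)) / 2 ^ n" .
    qed
    then show ?thesis by simp
  qed
  show ?thesis
  proof (intro exI conjI ballI)
    show "X 0 = x0" using Xeq[of 0] by simp
    fix t :: real assume t: "t \<in> {0..}"
    have "((\<lambda>u. integral {0..u} (\<lambda>s. G (X s))) has_vector_derivative G (X t)) (at t within {0..t+1})"
      by (rule integral_has_vector_derivative) (use cgen[OF Xc] t in auto)
    then have "((\<lambda>u. x0 + integral {0..u} (\<lambda>s. G (X s))) has_vector_derivative G (X t)) (at t within {0..t+1})"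
      by (auto intro!: derivative_eq_intros)
    moreover have "at t within {0..t+1} = at t within {0..}"
      by (rule at_within_nhd[where S="{..<t+1}"]) auto
    ultimately have "((\<lambda>u. x0 + integral {0..u} (\<lambda>s. G (X s))) has_vector_derivative G (X t)) (at t within {0..})"
      by simp
    note d = this
    show "(X has_vector_derivative G (X t)) (at t within {0..})"
      by (rule has_vector_derivative_transform[OF t _ d]) (use Xeq in auto)
  qed
qed


lemma vd_fst:
  assumes "(x has_vector_derivative v) F"
  shows "((\<lambda>t. fst (x t)) has_real_derivative fst v) F"
proof -
  have e: "(\<lambda>x. x * fst v) = (*) (fst v)" by (auto simp: fun_eq_iff)
  show ?thesis using has_derivative_fst[OF assms[unfolded has_vector_derivative_def]]
    by (simp add: has_field_derivative_def e)
qed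

lemma vd_snd:
  assumes "(x has_vector_derivative v) F"
  shows "((\<lambda>t. snd (x t)) has_real_derivative snd v) F"
proof -
  have e: "(\<lambda>x. x * snd v) = (*) (snd v)" by (auto simp: fun_eq_iff)
  show ?thesis using has_derivative_snd[OF assms[unfolded has_vector_derivative_def]]
    by (simp add: has_field_derivative_def e)
qed

lemma dq:
  fixes V k ra x :: real
  assumes "x > ra" "ra \<ge> 0"
  shows "((\<lambda>r. (V - k * V * sqrt (r^2 - ra^2)) / r + V * k^2 * (r - rd)) has_real_derivative
           V * k^2 - (V + k * V * ra^2 / sqrt (x^2 - ra^2)) / x^2) (at x)"
proof -
  have x0: "x > 0" using assms by linarith
  have p: "x^2 - ra^2 > 0" using assms by (simp add: power_strict_mono)
  have s: "sqrt (x^2 - ra^2) > 0" using p by simp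
  have ss: "sqrt (x^2 - ra^2) * sqrt (x^2 - ra^2) = x^2 - ra^2" using p by simp
  show ?thesis
    apply (rule derivative_eq_intros refl | use p x0 in force)+
    using x0 s ss apply (simp add: field_simps power2_eq_square)
    done
qed

lemma dh:
  fixes A V k ra x :: real
  assumes "x > ra" "ra \<ge> 0"
  shows "((\<lambda>r. (A - k * V * sqrt (r^2 - ra^2)) / r) has_real_derivative
           - (A + k * V * ra^2 / sqrt (x^2 - ra^2)) / x^2) (at x)"
proof -
  have x0: "x > 0" using assms by linarith
  have p: "x^2 - ra^2 > 0" using assms by (simp add: power_strict_mono)
  have s: "sqrt (x^2 - ra^2) > 0" using p by simp
  have ss: "sqrt (x^2 - ra^2) * sqrt (x^2 - ra^2) = x^2 - ra^2" using p by simp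
  show ?thesis
    apply (rule derivative_eq_intros refl | use p x0 in force)+
    using x0 s ss apply (simp add: field_simps power2_eq_square)
    done
qed

lemma dq2:
  fixes V k ra x :: real
  assumes "x > ra" "ra \<ge> 0"
  shows "((\<lambda>x. V * k^2 - (V + k * V * ra^2 / sqrt (x^2 - ra^2)) / x^2) has_real_derivative
           k * V * ra^2 / (sqrt (x^2 - ra^2)^3 * x) + 2 * (V + k * V * ra^2 / sqrt (x^2 - ra^2)) / x^3) (at x)"
proof -
  have x0: "x > 0" using assms by linarith
  have p: "x^2 - ra^2 > 0" using assms by (simp add: power_strict_mono)
  define u where "u = sqrt (x^2 - ra^2)"
  have s: "u > 0" using p by (simp add: u_def)
  have ss: "ra^2 = x^2 - u^2" using p by (simp add: u_def)
  show ?thesis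
    apply (rule derivative_eq_intros refl | use p x0 s in force)+
    unfolding u_def[symmetric]
    using x0 s apply (simp add: ss field_simps power2_eq_square power3_eq_cube)
    done
qed

lemma lip1:
  fixes g g' :: "real \<Rightarrow> real"
  assumes "\<And>z. z \<in> {c..d} \<Longrightarrow> (g has_real_derivative g' z) (at z)"
    and "\<And>z. z \<in> {c..d} \<Longrightarrow> \<bar>g' z\<bar> \<le> B"
    and "x \<in> {c..d}" "y \<in> {c..d}"
  shows "\<bar>g x - g y\<bar> \<le> B * \<bar>x - y\<bar>"
  using field_differentiable_bound[of "{c..d}" g g' B x y] assms
  by (auto simp: has_field_derivative_at_within)

lemma cont_bound:
  fixes g :: "real \<Rightarrow> real"
  assumes "continuous_on {c..d} g"
  shows "\<exists>B. \<forall>x\<in>{c..d}. \<bar>g x\<bar> \<le> B"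
proof -
  have "compact (g ` {c..d})" by (rule compact_continuous_image[OF assms]) simp
  then have "bounded (g ` {c..d})" by (rule compact_imp_bounded)
  then show ?thesis by (auto simp: bounded_real)
qed

lemma quad_bound:
  fixes q q' q'' :: "real \<Rightarrow> real"
  assumes "c \<le> x0" "x0 \<le> d" "q x0 = 0" "q' x0 = 0"
    and dq: "\<And>x. x \<in> {c..d} \<Longrightarrow> (q has_real_derivative q' x) (at x)"
    and dq': "\<And>x. x \<in> {c..d} \<Longrightarrow> (q' has_real_derivative q'' x) (at x)"
    and bd: "\<And>x. x \<in> {c..d} \<Longrightarrow> \<bar>q'' x\<bar> \<le> B"
    and x: "x \<in> {c..d}"
  shows "\<bar>q x\<bar> \<le> B * (x - x0)^2"
proof -
  let ?a = "min x0 x" and ?b = "max x0 x"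
  have sub: "{?a..?b} \<subseteq> {c..d}" using assms by auto
  have B0: "B \<ge> 0" using bd[of x] x by linarith
  have q'b: "\<bar>q' z\<bar> \<le> B * \<bar>x - x0\<bar>" if z: "z \<in> {?a..?b}" for z
  proof -
    have "\<bar>q' z - q' x0\<bar> \<le> B * \<bar>z - x0\<bar>"
    proof (rule lip1[of ?a ?b q' q'' B])
      fix w assume "w \<in> {?a..?b}"
      then have w: "w \<in> {c..d}" using sub by blast
      show "(q' has_real_derivative q'' w) (at w)" by (rule dq'[OF w])
      show "\<bar>q'' w\<bar> \<le> B" by (rule bd[OF w])
    qed (use z in auto)
    also have "\<dots> \<le> B * \<bar>x - x0\<bar>" using z B0 by (intro mult_left_mono) auto
    finally show ?thesis using assms by simp
  qed
  have "\<bar>q x - q x0\<bar> \<le> (B * \<bar>x - x0\<bar>) * \<bar>x - x0\<bar>"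
  proof (rule lip1[of ?a ?b q q'])
    fix w assume w': "w \<in> {?a..?b}"
    then have w: "w \<in> {c..d}" using sub by blast
    show "(q has_real_derivative q' w) (at w)" by (rule dq[OF w])
    show "\<bar>q' w\<bar> \<le> B * \<bar>x - x0\<bar>" by (rule q'b[OF w'])
  qed auto
  then show ?thesis using assms by (simp add: power2_eq_square abs_mult_self_eq mult.assoc)
qed

lemma sin_quad: fixes b :: real shows "\<bar>sin b - b\<bar> \<le> b^2"
proof -
  have "\<bar>sin b - b\<bar> \<le> 1 * (b - 0)^2"
    by (rule quad_bound[of "-\<bar>b\<bar>" 0 "\<bar>b\<bar>" "\<lambda>b. sin b - b" "\<lambda>b. cos b - 1" "\<lambda>b. - sin b"])
       (auto intro!: derivative_eq_intros)
  then show ?thesis by simp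
qed

lemma cos_quad: fixes b :: real shows "\<bar>cos b - 1\<bar> \<le> b^2"
proof -
  have "\<bar>cos b - 1\<bar> \<le> 1 * (b - 0)^2"
    by (rule quad_bound[of "-\<bar>b\<bar>" 0 "\<bar>b\<bar>" "\<lambda>b. cos b - 1" "\<lambda>b. - sin b" "\<lambda>b. - cos b"])
       (auto intro!: derivative_eq_intros)
  then show ?thesis by simp
qed

lemma abs_aux:
  fixes V s c :: real
  assumes "V \<ge> 0" "\<bar>s\<bar> \<le> 1" "c \<ge> 0"
  shows "\<bar>V * s + c\<bar> \<le> V + c"
proof -
  have "\<bar>V * s\<bar> \<le> V" using assms mult_left_mono[OF assms(2) assms(1)] by (simp add: abs_mult)
  then show ?thesis using abs_triangle_ineq[of "V * s" c] assms by linarith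
qed

lemma abs_aux2:
  fixes X w G :: real
  assumes "\<bar>X\<bar> / w \<le> G" "w > 0"
  shows "\<bar>- X / w + 0\<bar> \<le> G"
  using assms by (simp add: abs_divide)

lemma W_bounds:
  fixes a b k :: real
  assumes k: "k > 0"
  shows "min (k^2) 1 / 2 * (a^2 + b^2) \<le> k^2 * a^2 + k * a * b + b^2"
    "k^2 * a^2 + k * a * b + b^2 \<le> (k^2 + k + 1) * (a^2 + b^2)"
proof -
  have s1: "2 * \<bar>k * a * b\<bar> \<le> k^2 * a^2 + b^2"
    using sum_squares_bound[of "\<bar>k * a\<bar>" "\<bar>b\<bar>"] by (simp add: abs_mult power_mult_distrib)
  have m1: "min (k^2) 1 * a^2 \<le> k^2 * a^2" by (intro mult_right_mono) auto
  have m2: "min (k^2) 1 * b^2 \<le> b^2" using mult_right_mono[of "min (k^2) 1" 1 "b^2"] by simp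
  show "min (k^2) 1 / 2 * (a^2 + b^2) \<le> k^2 * a^2 + k * a * b + b^2"
    using s1 m1 m2 abs_ge_minus_self[of "k * a * b"] by (simp add: algebra_simps)
  have s2: "2 * \<bar>a * b\<bar> \<le> a^2 + b^2"
    using sum_squares_bound[of "\<bar>a\<bar>" "\<bar>b\<bar>"] by (simp add: abs_mult)
  have "k * a * b \<le> k * \<bar>a * b\<bar>" using k mult_left_mono[OF abs_ge_self[of "a * b"], of k] by (simp add: mult.assoc)
  also have "\<dots> \<le> k * (a^2 + b^2)" using s2 k by (simp add: mult_left_mono)
  finally have "k * a * b \<le> k * (a^2 + b^2)" .
  moreover have "k^2 * a^2 \<le> k^2 * (a^2 + b^2)" by (simp add: mult_left_mono)
  moreover have "b^2 \<le> a^2 + b^2" by simp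
  moreover have "(k^2 + k + 1) * (a^2 + b^2) = k^2 * (a^2 + b^2) + k * (a^2 + b^2) + (a^2 + b^2)"
    by (simp add: algebra_simps)
  ultimately show "k^2 * a^2 + k * a * b + b^2 \<le> (k^2 + k + 1) * (a^2 + b^2)"
    by linarith
qed

lemma lyap_alg:
  fixes a b R1 R2 k V C1 C2 n :: real
  assumes k: "k > 0" and V: "V > 0" and n: "n = sqrt (a^2 + b^2)"
    and R1: "\<bar>R1\<bar> \<le> C1 * (a^2 + b^2)" and R2: "\<bar>R2\<bar> \<le> C2 * (a^2 + b^2)"
    and C: "C1 \<ge> 0" "C2 \<ge> 0"
    and small: "n * ((2 * k^2 + k) * C1 + (k + 2) * C2) \<le> k * V * min (k^2) 1 / 4"
  shows "(2 * k^2 * a + k * b) * (V * b + R1) + (k * a + 2 * b) * (- V * k^2 * a - k * V * b + R2)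
          \<le> - (k * V / 2) * (k^2 * a^2 + k * a * b + b^2)"
proof -
  let ?W = "k^2 * a^2 + k * a * b + b^2"
  have an: "\<bar>a\<bar> \<le> n" unfolding n by (rule real_le_rsqrt) simp
  have bn: "\<bar>b\<bar> \<le> n" unfolding n by (rule real_le_rsqrt) simp
  have n0: "n \<ge> 0" unfolding n by simp
  have nsq: "n^2 = a^2 + b^2" unfolding n by simp
  have lin: "(2 * k^2 * a + k * b) * (V * b) + (k * a + 2 * b) * (- V * k^2 * a - k * V * b) = - (k * V) * ?W"
    by (simp add: algebra_simps power2_eq_square)
  have e1: "\<bar>2 * k^2 * a + k * b\<bar> \<le> (2 * k^2 + k) * n"
  proof -
    have "\<bar>2 * k^2 * a + k * b\<bar> \<le> \<bar>2 * k^2 * a\<bar> + \<bar>k * b\<bar>" by (rule abs_triangle_ineq)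
    also have "\<dots> = 2 * k^2 * \<bar>a\<bar> + k * \<bar>b\<bar>" using k by (simp add: abs_mult)
    also have "\<dots> \<le> 2 * k^2 * n + k * n" using an bn k by (intro add_mono mult_left_mono) auto
    finally show ?thesis by (simp add: algebra_simps)
  qed
  have e2: "\<bar>k * a + 2 * b\<bar> \<le> (k + 2) * n"
  proof -
    have "\<bar>k * a + 2 * b\<bar> \<le> \<bar>k * a\<bar> + \<bar>2 * b\<bar>" by (rule abs_triangle_ineq)
    also have "\<dots> = k * \<bar>a\<bar> + 2 * \<bar>b\<bar>" using k by (simp add: abs_mult)
    also have "\<dots> \<le> k * n + 2 * n" using an bn k by (intro add_mono mult_left_mono) auto
    finally show ?thesis by (simp add: algebra_simps)
  qed
  have t1: "\<bar>(2 * k^2 * a + k * b) * R1\<bar> \<le> ((2 * k^2 + k) * n) * (C1 * n^2)"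
    unfolding abs_mult nsq by (rule mult_mono[OF e1 R1]) (use k n0 in auto)
  have t2: "\<bar>(k * a + 2 * b) * R2\<bar> \<le> ((k + 2) * n) * (C2 * n^2)"
    unfolding abs_mult nsq by (rule mult_mono[OF e2 R2]) (use k n0 in auto)
  have err: "((2 * k^2 + k) * n) * (C1 * n^2) + ((k + 2) * n) * (C2 * n^2)
      = (n * ((2 * k^2 + k) * C1 + (k + 2) * C2)) * n^2" by (simp add: algebra_simps)
  have "(n * ((2 * k^2 + k) * C1 + (k + 2) * C2)) * n^2 \<le> (k * V * min (k^2) 1 / 4) * n^2"
    by (rule mult_right_mono[OF small]) simp
  also have "\<dots> \<le> (k * V / 2) * ?W"
  proof -
    have W: "min (k^2) 1 * (a^2 + b^2) \<le> 2 * ?W"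
    proof -
      have "2 * \<bar>k * a * b\<bar> \<le> k^2 * a^2 + b^2"
        using sum_squares_bound[of "\<bar>k * a\<bar>" "\<bar>b\<bar>"] by (simp add: abs_mult power_mult_distrib)
      moreover have "min (k^2) 1 * a^2 \<le> k^2 * a^2" by (intro mult_right_mono) auto
      moreover have "min (k^2) 1 * b^2 \<le> b^2" using mult_right_mono[of "min (k^2) 1" 1 "b^2"] by simp
      ultimately show ?thesis using abs_ge_minus_self[of "k * a * b"] by (simp add: algebra_simps)
    qed
    have kv: "k * V / 4 \<ge> 0" using k V by simp
    have "(k * V * min (k^2) 1 / 4) * n^2 = (k * V / 4) * (min (k^2) 1 * (a^2 + b^2))"
      by (simp add: nsq)
    also have "\<dots> \<le> (k * V / 4) * (2 * ?W)" by (rule mult_left_mono[OF W kv])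
    finally show ?thesis by (simp add: algebra_simps)
  qed
  finally have "\<bar>(2 * k^2 * a + k * b) * R1\<bar> + \<bar>(k * a + 2 * b) * R2\<bar> \<le> (k * V / 2) * ?W"
    using t1 t2 err by linarith
  moreover have "(2 * k^2 * a + k * b) * (V * b + R1) + (k * a + 2 * b) * (- V * k^2 * a - k * V * b + R2)
     = - (k * V) * ?W + (2 * k^2 * a + k * b) * R1 + (k * a + 2 * b) * R2"
    using lin by (simp add: algebra_simps)
  ultimately show ?thesis
    using abs_ge_self[of "(2 * k^2 * a + k * b) * R1"] abs_ge_self[of "(k * a + 2 * b) * R2"] by linarith
qed


context
  fixes V rd k ra :: real
  assumes V: "V > 0" and rd: "rd > 0" and kr: "k > 1 / rd" and ra: "ra = sqrt (rd^2 - 1 / k^2)"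
begin

lemma k0: "k > 0"
proof -
  have "1 / rd > 0" using rd by simp
  then show ?thesis using kr by linarith
qed

lemma krd: "k * rd > 1"
  using kr rd by (simp add: field_simps)

lemma rd_ge: "1 / k^2 \<le> rd^2"
proof -
  have "(k * rd)^2 > 1" by (rule one_less_power[OF krd]) simp
  then have "rd^2 > 1 / k^2" using k0 by (simp add: field_simps power_mult_distrib)
  then show ?thesis by linarith
qed

lemma ra_sq: "ra^2 = rd^2 - 1 / k^2"
  using rd_ge unfolding ra by simp

lemma ra0: "ra \<ge> 0" using rd_ge unfolding ra by simp

lemma ra_lt: "ra < rd"
proof -
  have "ra^2 < rd^2" using ra_sq k0 by simp
  then show ?thesis using power_less_imp_less_base[of ra 2 rd] rd by simp
qed

lemma u_rd: "sqrt (rd^2 - ra^2) = 1 / k"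
  using ra_sq k0 by (simp add: real_sqrt_divide)

lemma field_eq:
  assumes "x > ra"
  shows "cl_field V k ra (x, \<theta>) = (- V * cos \<theta>, (V * sin \<theta> - k * V * sqrt (x^2 - ra^2)) / x + k * V * cos \<theta>)"
proof -
  have x0: "x > 0" using assms ra0 by linarith
  have le: "ra / x \<le> 1" "- 1 \<le> ra / x" using assms x0 ra0 by (auto simp: field_simps)
  have "1 - (ra / x)^2 = (x^2 - ra^2) / x^2" using x0 by (simp add: field_simps)
  then have s: "sqrt (1 - (ra / x)^2) = sqrt (x^2 - ra^2) / x"
    using x0 by (simp add: real_sqrt_divide)
  have c: "cos (arcsin (ra / x)) = sqrt (x^2 - ra^2) / x"
    using cos_arcsin[OF le(2) le(1)] s by simp
  show ?thesis
    using assms x0 unfolding cl_field_def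
    by (simp add: c field_simps)
qed

definition "rho0 = min (rd / 2) ((rd - ra) / 2)"

lemma rho0_pos: "rho0 > 0" using rd ra_lt by (simp add: rho0_def)

lemma cb_fst:
  assumes "z \<in> cball (rd, pi / 2) rho0"
  shows "\<bar>fst z - rd\<bar> \<le> rho0" "\<bar>snd z - pi / 2\<bar> \<le> rho0" "fst z \<ge> rd - rho0" "fst z \<le> rd + rho0"
    "fst z > ra" "fst z \<ge> rd / 2" "rd - rho0 > ra" "rd - rho0 \<ge> rd / 2"
proof -
  have n: "norm (z - (rd, pi / 2)) \<le> rho0" using assms by (simp add: dist_norm norm_minus_commute)
  have "\<bar>fst z - rd\<bar> = norm (fst (z - (rd, pi / 2)))" by simp
  also have "\<dots> \<le> norm (z - (rd, pi / 2))" by (metis norm_fst_le prod.collapse)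
  finally show a: "\<bar>fst z - rd\<bar> \<le> rho0" using n by linarith
  have "\<bar>snd z - pi / 2\<bar> = norm (snd (z - (rd, pi / 2)))" by simp
  also have "\<dots> \<le> norm (z - (rd, pi / 2))" by (metis norm_snd_le prod.collapse)
  finally show "\<bar>snd z - pi / 2\<bar> \<le> rho0" using n by linarith
  show "fst z \<ge> rd - rho0" "fst z \<le> rd + rho0" using a by auto
  show "rd - rho0 > ra" "rd - rho0 \<ge> rd / 2" using ra_lt rd by (auto simp: rho0_def min_def field_simps)
  then show "fst z > ra" "fst z \<ge> rd / 2" using a by auto
qed


lemma comp_le: fixes z :: "real \<times> real" shows "\<bar>fst z\<bar> \<le> norm z" "\<bar>snd z\<bar> \<le> norm z"
  using norm_fst_le[of "fst z" "snd z"] norm_snd_le[of "snd z" "fst z"] by auto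

lemma lip_exists:
  "\<exists>L>0. \<forall>x\<in>cball (rd, pi/2) rho0. \<forall>y\<in>cball (rd, pi/2) rho0.
      norm (cl_field V k ra x - cl_field V k ra y) \<le> L * norm (x - y)"
proof -
  define r1 where "r1 = rd - rho0"
  define r2 where "r2 = rd + rho0"
  have r1: "r1 > ra" "r1 \<ge> rd / 2" using cb_fst[of "(rd, pi/2)"] rho0_pos by (auto simp: r1_def)
  have r1pos: "r1 > 0" using r1 rd by linarith
  have pos: "r^2 - ra^2 > 0" "r > 0" if "r \<in> {r1..r2}" for r
  proof -
    show "r > 0" using that r1pos by auto
    have "ra < r" using that r1 by auto
    then show "r^2 - ra^2 > 0" using ra0 by (simp add: power_strict_mono)
  qed
  define g where "g r = (V + k * V * ra^2 / sqrt (r^2 - ra^2)) / r^2" for r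
  have "continuous_on {r1..r2} g"
    unfolding g_def
  proof (intro continuous_intros ballI)
    fix r assume "r \<in> {r1..r2}"
    from pos[OF this] show "sqrt (r^2 - ra^2) \<noteq> 0" "r^2 \<noteq> 0" by auto
  qed
  then obtain Bh where Bh: "\<And>r. r \<in> {r1..r2} \<Longrightarrow> \<bar>g r\<bar> \<le> Bh" using cont_bound by blast
  have Bh0: "Bh \<ge> 0" using Bh[of r1] r1pos rho0_pos by (auto simp: r2_def r1_def)
  define Bt where "Bt = V / r1 + k * V"
  define L where "L = V + Bh + Bt + 1"
  have Bt0: "Bt \<ge> 0" using V k0 r1pos by (simp add: Bt_def)
  have L0: "L > 0" using V Bh0 Bt0 by (simp add: L_def)
  define F where "F r t = (V * sin t - k * V * sqrt (r^2 - ra^2)) / r + k * V * cos t" for r t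
  have main: "norm (cl_field V k ra x - cl_field V k ra y) \<le> L * norm (x - y)"
    if x: "x \<in> cball (rd, pi/2) rho0" and y: "y \<in> cball (rd, pi/2) rho0" for x y
  proof -
    obtain r t where xe: "x = (r, t)" by (cases x)
    obtain r' t' where ye: "y = (r', t')" by (cases y)
    have rr: "r \<in> {r1..r2}" "r' \<in> {r1..r2}" using cb_fst[OF x] cb_fst[OF y] by (auto simp: xe ye r1_def r2_def)
    have fx: "cl_field V k ra x = (- V * cos t, F r t)"
      unfolding xe F_def by (rule field_eq) (use rr r1 in auto)
    have fy: "cl_field V k ra y = (- V * cos t', F r' t')"
      unfolding ye F_def by (rule field_eq) (use rr r1 in auto)
    have nr: "\<bar>r - r'\<bar> \<le> norm (x - y)" using comp_le(1)[of "x - y"] by (simp add: xe ye)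
    have nt: "\<bar>t - t'\<bar> \<le> norm (x - y)" using comp_le(2)[of "x - y"] by (simp add: xe ye)
    have d1: "\<bar>cos t - cos t'\<bar> \<le> 1 * \<bar>t - t'\<bar>"
      by (rule lip1[of "min t t'" "max t t'" cos "\<lambda>t. - sin t"]) (auto intro!: derivative_eq_intros)
    have d2: "\<bar>F r t - F r' t\<bar> \<le> Bh * \<bar>r - r'\<bar>"
    proof (rule lip1[of r1 r2 "\<lambda>r. F r t" "\<lambda>r. - (V * sin t + k * V * ra^2 / sqrt (r^2 - ra^2)) / r^2 + 0"])
      fix z assume z: "z \<in> {r1..r2}"
      have zr: "z > ra" using z r1 by auto
      show "((\<lambda>r. F r t) has_real_derivative - (V * sin t + k * V * ra^2 / sqrt (z^2 - ra^2)) / z^2 + 0) (at z)"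
        unfolding F_def by (rule DERIV_add[OF dh[OF zr ra0] DERIV_const])
      have c0: "k * V * ra^2 / sqrt (z^2 - ra^2) \<ge> 0"
        using k0 V pos[OF z] by (intro divide_nonneg_nonneg mult_nonneg_nonneg) auto
      have "\<bar>V * sin t + k * V * ra^2 / sqrt (z^2 - ra^2)\<bar> \<le> V + k * V * ra^2 / sqrt (z^2 - ra^2)"
        by (rule abs_aux) (use V c0 in auto)
      then have "\<bar>V * sin t + k * V * ra^2 / sqrt (z^2 - ra^2)\<bar> / z^2 \<le> g z"
        unfolding g_def by (rule divide_right_mono) simp
      then have "\<bar>- (V * sin t + k * V * ra^2 / sqrt (z^2 - ra^2)) / z^2 + 0\<bar> \<le> g z"
        by (rule abs_aux2) (use pos[OF z] in simp)
      then show "\<bar>- (V * sin t + k * V * ra^2 / sqrt (z^2 - ra^2)) / z^2 + 0\<bar> \<le> Bh"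
        using Bh[OF z] by linarith
    qed (use rr in auto)
    have d3: "\<bar>F r' t - F r' t'\<bar> \<le> Bt * \<bar>t - t'\<bar>"
    proof (rule lip1[of "min t t'" "max t t'" "\<lambda>t. F r' t" "\<lambda>t. V * cos t / r' - k * V * sin t"])
      fix z :: real
      show "((\<lambda>t. F r' t) has_real_derivative V * cos z / r' - k * V * sin z) (at z)"
        unfolding F_def using pos(2)[OF rr(2)] by (auto intro!: derivative_eq_intros)
      have "\<bar>V * cos z / r'\<bar> \<le> V / r1"
      proof -
        have "\<bar>V * cos z / r'\<bar> = V * \<bar>cos z\<bar> / r'" using V pos[OF rr(2)] by (simp add: abs_mult)
        also have "\<dots> \<le> V * 1 / r'" using V pos[OF rr(2)] abs_cos_le_one[of z]
          by (intro divide_right_mono mult_left_mono) auto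
        also have "\<dots> \<le> V / r1" using V r1pos rr(2) by (simp add: frac_le)
        finally show ?thesis .
      qed
      moreover have "\<bar>k * V * sin z\<bar> \<le> k * V"
        using k0 V abs_sin_le_one[of z] by (simp add: abs_mult)
      ultimately show "\<bar>V * cos z / r' - k * V * sin z\<bar> \<le> Bt" unfolding Bt_def by linarith
    qed auto
    have "norm (cl_field V k ra x - cl_field V k ra y) \<le> \<bar>- V * cos t - - V * cos t'\<bar> + \<bar>F r t - F r' t'\<bar>"
      unfolding fx fy using norm_Pair_le[of "- V * cos t - - V * cos t'" "F r t - F r' t'"] by simp
    also have "\<dots> \<le> V * \<bar>t - t'\<bar> + (Bh * \<bar>r - r'\<bar> + Bt * \<bar>t - t'\<bar>)"
    proof (rule add_mono)
      have e: "- V * cos t - - V * cos t' = V * (cos t' - cos t)" by (simp add: algebra_simps)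
      have "\<bar>- V * cos t - - V * cos t'\<bar> = V * \<bar>cos t - cos t'\<bar>" unfolding e using V
        by (simp add: abs_mult abs_minus_commute)
      then show "\<bar>- V * cos t - - V * cos t'\<bar> \<le> V * \<bar>t - t'\<bar>" using mult_left_mono[OF d1, of V] V by simp
      show "\<bar>F r t - F r' t'\<bar> \<le> Bh * \<bar>r - r'\<bar> + Bt * \<bar>t - t'\<bar>" using d2 d3 by linarith
    qed
    also have "\<dots> \<le> V * norm (x - y) + (Bh * norm (x - y) + Bt * norm (x - y))"
      using nr nt V Bh0 Bt0 by (intro add_mono mult_left_mono) auto
    also have "\<dots> \<le> L * norm (x - y)" by (simp add: L_def algebra_simps)
    finally show ?thesis .
  qed
  show ?thesis using L0 main by blast
qed


lemma lyap_exists: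
  "\<exists>\<rho>>0. \<rho> \<le> rho0 \<and> (\<forall>z\<in>cball (rd, pi/2) \<rho>.
     (2 * k^2 * (fst z - rd) + k * (snd z - pi/2)) * fst (cl_field V k ra z)
     + (k * (fst z - rd) + 2 * (snd z - pi/2)) * snd (cl_field V k ra z)
     \<le> - (k * V / 2) * (k^2 * (fst z - rd)^2 + k * (fst z - rd) * (snd z - pi/2) + (snd z - pi/2)^2))"
proof -
  define r1 where "r1 = rd - rho0"
  define r2 where "r2 = rd + rho0"
  have r1: "r1 > ra" "r1 \<ge> rd / 2" using cb_fst[of "(rd, pi/2)"] rho0_pos by (auto simp: r1_def)
  have r1pos: "r1 > 0" using r1 rd by linarith
  have pos: "r^2 - ra^2 > 0" "r > 0" "r > ra" if "r \<in> {r1..r2}" for r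
  proof -
    show "r > 0" using that r1pos by auto
    show "ra < r" using that r1 by auto
    then show "r^2 - ra^2 > 0" using ra0 by (simp add: power_strict_mono)
  qed
  define q where "q r = (V - k * V * sqrt (r^2 - ra^2)) / r + V * k^2 * (r - rd)" for r
  define q' where "q' r = V * k^2 - (V + k * V * ra^2 / sqrt (r^2 - ra^2)) / r^2" for r
  define q'' where "q'' r = k * V * ra^2 / (sqrt (r^2 - ra^2)^3 * r) + 2 * (V + k * V * ra^2 / sqrt (r^2 - ra^2)) / r^3" for r
  have "continuous_on {r1..r2} q''"
    unfolding q''_def
  proof (intro continuous_intros ballI)
    fix r assume "r \<in> {r1..r2}"
    from pos[OF this] show "sqrt (r^2 - ra^2) \<noteq> 0" "r^3 \<noteq> 0" "sqrt (r^2 - ra^2)^3 * r \<noteq> 0" by auto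
  qed
  then obtain Bq where Bq: "\<And>r. r \<in> {r1..r2} \<Longrightarrow> \<bar>q'' r\<bar> \<le> Bq" using cont_bound by blast
  have Bq0: "Bq \<ge> 0" using Bq[of r1] r1pos rho0_pos by (auto simp: r2_def r1_def)
  have qb: "\<bar>q r\<bar> \<le> Bq * (r - rd)^2" if r: "r \<in> {r1..r2}" for r
  proof (rule quad_bound[of r1 rd r2 q q' q''])
    show "r1 \<le> rd" "rd \<le> r2" using rho0_pos by (auto simp: r1_def r2_def)
    show "q rd = 0" using k0 unfolding q_def u_rd by simp
    have "q' rd = V * k^2 - (V + k * V * ra^2 * k) / rd^2" using k0 by (simp add: q'_def u_rd)
    moreover have "V + k * V * ra^2 * k = V * k^2 * rd^2" using k0 unfolding ra_sq by (simp add: field_simps eval_nat_numeral)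
    ultimately show "q' rd = 0" using rd by simp
    fix x assume x: "x \<in> {r1..r2}"
    show "(q has_real_derivative q' x) (at x)"
      unfolding q_def q'_def by (rule dq[OF pos(3)[OF x] ra0])
    show "(q' has_real_derivative q'' x) (at x)"
      unfolding q'_def q''_def by (rule dq2[OF pos(3)[OF x] ra0])
    show "\<bar>q'' x\<bar> \<le> Bq" by (rule Bq[OF x])
  qed (use r in auto)
  define C1 where "C1 = V"
  define C2 where "C2 = Bq + V / r1 + k * V"
  define C0 where "C0 = (2 * k^2 + k) * C1 + (k + 2) * C2"
  have C1: "C1 \<ge> 0" using V by (simp add: C1_def)
  have C2: "C2 \<ge> 0" using Bq0 V r1pos k0 by (simp add: C2_def)
  have C0: "C0 > 0" unfolding C0_def using k0 V C2 by (simp add: C1_def add_pos_nonneg)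
  define \<rho> where "\<rho> = min rho0 (k * V * min (k^2) 1 / 4 / C0)"
  have \<rho>0: "\<rho> > 0" using rho0_pos C0 k0 V by (simp add: \<rho>_def)
  have main: "(2 * k^2 * (fst z - rd) + k * (snd z - pi/2)) * fst (cl_field V k ra z)
     + (k * (fst z - rd) + 2 * (snd z - pi/2)) * snd (cl_field V k ra z)
     \<le> - (k * V / 2) * (k^2 * (fst z - rd)^2 + k * (fst z - rd) * (snd z - pi/2) + (snd z - pi/2)^2)"
    if z: "z \<in> cball (rd, pi/2) \<rho>" for z
  proof -
    have z0: "z \<in> cball (rd, pi/2) rho0" using z by (auto simp: \<rho>_def)
    obtain r t where ze: "z = (r, t)" by (cases z)
    define a where "a = r - rd"
    define b where "b = t - pi/2"
    have te: "t = b + pi/2" by (simp add: b_def)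
    have rr: "r \<in> {r1..r2}" using cb_fst[OF z0] by (auto simp: ze r1_def r2_def)
    have rpos: "r > 0" "r \<ge> r1" using pos[OF rr] rr by auto
    have fz: "cl_field V k ra z = (- V * cos t, (V * sin t - k * V * sqrt (r^2 - ra^2)) / r + k * V * cos t)"
      unfolding ze by (rule field_eq) (use pos[OF rr] in auto)
    define R1 where "R1 = V * (sin b - b)"
    define R2 where "R2 = snd (cl_field V k ra z) + V * k^2 * a + k * V * b"
    have f1: "fst (cl_field V k ra z) = V * b + R1" unfolding fz R1_def te by (simp add: cos_add algebra_simps)
    have f2: "snd (cl_field V k ra z) = - V * k^2 * a - k * V * b + R2" unfolding R2_def by simp
    have st: "sin t = cos b" "cos t = - sin b" by (simp_all add: te sin_add cos_add)
    have R2e: "R2 = q r + V * (cos b - 1) / r - k * V * (sin b - b)"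
      unfolding R2_def fz q_def st a_def using rpos by (simp add: field_simps)
    have R1b: "\<bar>R1\<bar> \<le> C1 * (a^2 + b^2)"
    proof -
      have "\<bar>R1\<bar> = V * \<bar>sin b - b\<bar>" using V by (simp add: R1_def abs_mult)
      also have "\<dots> \<le> V * b^2" using V sin_quad[of b] by (simp add: mult_left_mono)
      also have "\<dots> \<le> C1 * (a^2 + b^2)" using V by (simp add: C1_def mult_left_mono)
      finally show ?thesis .
    qed
    have R2b: "\<bar>R2\<bar> \<le> C2 * (a^2 + b^2)"
    proof -
      have "\<bar>R2\<bar> \<le> \<bar>q r\<bar> + \<bar>V * (cos b - 1) / r\<bar> + \<bar>k * V * (sin b - b)\<bar>"
        unfolding R2e by linarith
      also have "\<dots> \<le> Bq * a^2 + V / r1 * b^2 + k * V * b^2"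
      proof (intro add_mono)
        show "\<bar>q r\<bar> \<le> Bq * a^2" using qb[OF rr] by (simp add: a_def)
        have "\<bar>V * (cos b - 1) / r\<bar> = V * \<bar>cos b - 1\<bar> / r" using V rpos by (simp add: abs_mult)
        also have "\<dots> \<le> V * b^2 / r" using V rpos cos_quad[of b]
          by (intro divide_right_mono mult_left_mono) auto
        also have "\<dots> \<le> V * b^2 / r1" using V rpos r1pos
          by (intro divide_left_mono) auto
        finally show "\<bar>V * (cos b - 1) / r\<bar> \<le> V / r1 * b^2" by simp
        have "\<bar>k * V * (sin b - b)\<bar> = k * V * \<bar>sin b - b\<bar>" using V k0 by (simp add: abs_mult)
        also have "\<dots> \<le> k * V * b^2" using V k0 sin_quad[of b] by (intro mult_left_mono) auto
        finally show "\<bar>k * V * (sin b - b)\<bar> \<le> k * V * b^2" .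
      qed
      also have "\<dots> \<le> C2 * (a^2 + b^2)"
        unfolding C2_def using Bq0 V r1pos k0
        by (simp add: algebra_simps add_mono mult_left_mono)
      finally show ?thesis .
    qed
    define n where "n = sqrt (a^2 + b^2)"
    have nz: "n = norm (z - (rd, pi/2))" by (simp add: n_def ze a_def b_def norm_Pair)
    have "n \<le> \<rho>" using z by (simp add: nz dist_norm norm_minus_commute)
    then have "n \<le> k * V * min (k^2) 1 / 4 / C0" by (simp add: \<rho>_def)
    then have small: "n * C0 \<le> k * V * min (k^2) 1 / 4" using C0 by (simp add: field_simps)
    have "(2 * k^2 * a + k * b) * (V * b + R1) + (k * a + 2 * b) * (- V * k^2 * a - k * V * b + R2)
          \<le> - (k * V / 2) * (k^2 * a^2 + k * a * b + b^2)"
      by (rule lyap_alg[OF k0 V n_def R1b R2b C1 C2]) (use small in \<open>simp add: C0_def\<close>)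
    then show ?thesis unfolding f1 f2 by (simp add: ze a_def b_def)
  qed
  have "\<rho> \<le> rho0" by (simp add: \<rho>_def)
  then show ?thesis using \<rho>0 main by blast
qed


lemma stab:
  fixes h :: "real \<times> real \<Rightarrow> real \<times> real" and x :: "real \<Rightarrow> real \<times> real" and \<rho> :: real
  assumes \<rho>: "\<rho> > 0"
    and lyap: "\<forall>z\<in>cball (rd, pi/2) \<rho>.
     (2 * k^2 * (fst z - rd) + k * (snd z - pi/2)) * fst (cl_field V k ra z)
     + (k * (fst z - rd) + 2 * (snd z - pi/2)) * snd (cl_field V k ra z)
     \<le> - (k * V / 2) * (k^2 * (fst z - rd)^2 + k * (fst z - rd) * (snd z - pi/2) + (snd z - pi/2)^2)"
    and hf: "\<And>z. z \<in> cball (rd, pi/2) \<rho> \<Longrightarrow> h z = cl_field V k ra z"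
    and sol: "ode_solution h x {0..}"
    and x0: "norm (x 0 - (rd, pi/2)) < \<rho> * (min (k^2) 1 / 2) / (2 * (k^2 + k + 1))"
  shows "\<forall>t\<ge>0. norm (x t - (rd, pi/2)) < \<rho> / 2 \<and>
    norm (x t - (rd, pi/2)) \<le> ((k^2 + k + 1) / (min (k^2) 1 / 2)) * norm (x 0 - (rd, pi/2)) * exp (- (k * V / 4) * t)"
proof -
  define p :: "real \<times> real" where "p = (rd, pi/2)"
  define m where "m = min (k^2) 1 / 2"
  define Mw where "Mw = k^2 + k + 1"
  define \<beta> where "\<beta> = k * V / 2"
  have m0: "m > 0" using k0 by (simp add: m_def)
  have mMw: "m \<le> Mw" "Mw \<ge> 1" using k0 by (auto simp: m_def Mw_def min_def)
  have \<beta>0: "\<beta> > 0" using k0 V by (simp add: \<beta>_def)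
  define A where "A t = fst (x t) - rd" for t
  define B where "B t = snd (x t) - pi/2" for t
  define W where "W t = k^2 * (A t)^2 + k * A t * B t + (B t)^2" for t
  define N where "N t = norm (x t - p)" for t
  define Wd where "Wd t = (2 * k^2 * A t + k * B t) * fst (h (x t)) + (k * A t + 2 * B t) * snd (h (x t))" for t
  have Nsq: "(N t)^2 = (A t)^2 + (B t)^2" for t
  proof -
    have "x t - p = (A t, B t)" by (simp add: A_def B_def p_def prod_eq_iff)
    then show ?thesis by (simp add: N_def norm_Pair)
  qed
  have N0: "N t \<ge> 0" for t by (simp add: N_def)
  have Wlow: "m * (N t)^2 \<le> W t" for t
    unfolding Nsq m_def W_def using W_bounds(1)[OF k0] by simp
  have Wup: "W t \<le> Mw * (N t)^2" for t
    unfolding Nsq Mw_def W_def using W_bounds(2)[OF k0] by simp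
  have xd: "(x has_vector_derivative h (x t)) (at t within {0..})" if "t \<ge> 0" for t
    using sol that by (simp add: ode_solution_def)
  have xc: "continuous_on {0..} x"
    unfolding continuous_on_eq_continuous_within
    using has_vector_derivative_continuous[OF xd] by auto
  have Nc: "continuous_on {0..} N" unfolding N_def by (intro continuous_intros xc)
  have Wc: "continuous_on {0..} W" unfolding W_def A_def B_def by (intro continuous_intros xc)
  have Wder: "(W has_real_derivative Wd t) (at t within {0..})" if "t \<ge> 0" for t
  proof -
    note d1 = vd_fst[OF xd[OF that]] and d2 = vd_snd[OF xd[OF that]]
    show ?thesis unfolding W_def A_def B_def Wd_def
      by (rule derivative_eq_intros d1 d2 refl)+ (simp add: algebra_simps)
  qed
  have incb: "x t \<in> cball (rd, pi/2) \<rho> \<longleftrightarrow> N t \<le> \<rho>" for t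
    by (simp add: N_def p_def dist_norm norm_minus_commute)
  have Wdle: "Wd t \<le> - \<beta> * W t" if "N t \<le> \<rho>" for t
  proof -
    have z: "x t \<in> cball (rd, pi/2) \<rho>" using that incb by simp
    show ?thesis using lyap[rule_format, OF z] unfolding Wd_def hf[OF z] W_def A_def B_def \<beta>_def
      by simp
  qed
  have decay: "W T \<le> W 0 * exp (- \<beta> * T)" if T: "T \<ge> 0" and inb: "\<And>s. s \<in> {0..T} \<Longrightarrow> N s \<le> \<rho>" for T
  proof -
    define g where "g s = W s * exp (\<beta> * s)" for s
    have "g T \<le> g 0"
    proof (rule DERIV_nonpos_imp_decreasing_open[OF T])
      fix s assume s: "0 < s" "s < T"
      have "at s within {0..} = at s" by (rule at_within_interior) (use s in auto)
      then have "(W has_real_derivative Wd s) (at s)" using Wder[of s] s by simp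
      then have "(g has_real_derivative Wd s * exp (\<beta> * s) + W s * (exp (\<beta> * s) * \<beta>)) (at s)"
        unfolding g_def by (auto intro!: derivative_eq_intros)
      moreover have "Wd s * exp (\<beta> * s) + W s * (exp (\<beta> * s) * \<beta>) \<le> 0"
      proof -
        have "s \<in> {0..T}" using s by auto
        from Wdle[OF inb[OF this]] have "Wd s + \<beta> * W s \<le> 0" by simp
        then have "(Wd s + \<beta> * W s) * exp (\<beta> * s) \<le> 0" by (simp add: mult_nonpos_nonneg)
        then show ?thesis by (simp add: algebra_simps)
      qed
      ultimately show "\<exists>y. (g has_real_derivative y) (at s) \<and> y \<le> 0" by blast
    next
      show "continuous_on {0..T} g" unfolding g_def
        by (intro continuous_intros continuous_on_subset[OF Wc]) auto
    qed
    then have "W T * exp (\<beta> * T) \<le> W 0" by (simp add: g_def)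
    then have "W T * exp (\<beta> * T) * exp (- \<beta> * T) \<le> W 0 * exp (- \<beta> * T)" by (simp add: mult_right_mono)
    then show ?thesis by (simp add: mult.assoc exp_add[symmetric])
  qed
  define \<delta> where "\<delta> = \<rho> * m / (2 * Mw)"
  have x0': "N 0 < \<delta>" using x0 by (simp add: N_def p_def \<delta>_def m_def Mw_def)
  have \<delta>le: "\<delta> \<le> \<rho> / 2" using mMw \<rho> m0 by (simp add: \<delta>_def field_simps)
  have W0: "W 0 < m * (\<rho> / 2)^2"
  proof -
    have "W 0 \<le> Mw * (N 0)^2" by (rule Wup)
    also have "\<dots> < Mw * \<delta>^2" using x0' N0[of 0] mMw by (intro mult_strict_left_mono power_strict_mono) auto
    also have "\<dots> = (\<rho> / 2)^2 * m * (m / Mw)" using mMw by (simp add: \<delta>_def field_simps power2_eq_square)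
    also have "\<dots> \<le> (\<rho> / 2)^2 * m * 1" using mMw m0 by (intro mult_left_mono) auto
    finally show ?thesis by (simp add: mult.commute)
  qed
  have stay: "N t < \<rho> / 2" if t: "t \<ge> 0" for t
  proof (rule ccontr)
    assume "\<not> N t < \<rho> / 2"
    then have Nt: "N t \<ge> \<rho> / 2" by simp
    define Z where "Z = {s \<in> {0..t}. N s = \<rho> / 2}"
    have NcT: "continuous_on {0..s} N" for s by (rule continuous_on_subset[OF Nc]) auto
    have "\<exists>s. 0 \<le> s \<and> s \<le> t \<and> N s = \<rho> / 2"
      by (rule IVT'[OF _ Nt t NcT]) (use x0' \<delta>le in auto)
    then have Zne: "Z \<noteq> {}" by (auto simp: Z_def)
    have "closed Z" unfolding Z_def by (rule continuous_closed_preimage_constant[OF NcT]) simp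
    moreover have "bounded Z"
      by (rule bounded_subset[OF bounded_closed_interval[of 0 t]]) (auto simp: Z_def)
    ultimately have "compact Z" by (simp add: compact_eq_bounded_closed)
    then obtain t1 where t1: "t1 \<in> Z" "\<And>y. y \<in> Z \<Longrightarrow> t1 \<le> y"
      using compact_attains_inf[OF _ Zne] by blast
    have t1b: "0 \<le> t1" "t1 \<le> t" "N t1 = \<rho> / 2" using t1(1) by (auto simp: Z_def)
    have below: "N s \<le> \<rho> / 2" if s: "s \<in> {0..t1}" for s
    proof (rule ccontr)
      assume "\<not> N s \<le> \<rho> / 2"
      then have Ns: "N s \<ge> \<rho> / 2" by simp
      have "\<exists>s'. 0 \<le> s' \<and> s' \<le> s \<and> N s' = \<rho> / 2"
        by (rule IVT'[OF _ Ns _ NcT]) (use x0' \<delta>le s in auto)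
      then obtain s' where s': "0 \<le> s'" "s' \<le> s" "N s' = \<rho> / 2" by blast
      have "s' \<in> Z" using s' s t1b by (auto simp: Z_def)
      then have "t1 \<le> s'" by (rule t1(2))
      then have "s = t1" using s s' by auto
      with \<open>\<not> N s \<le> \<rho> / 2\<close> t1b show False by simp
    qed
    have "W t1 \<le> W 0 * exp (- \<beta> * t1)"
      by (rule decay[OF t1b(1)]) (use below \<rho> in force)
    also have "\<dots> \<le> W 0"
    proof -
      have "m * (N 0)^2 \<ge> 0" using m0 by simp
      then have W00: "W 0 \<ge> 0" using Wlow[of 0] by linarith
      have "exp (- \<beta> * t1) \<le> 1" using \<beta>0 t1b by simp
      then show ?thesis using W00 by (simp add: mult_left_le)
    qed
    also have "\<dots> < m * (\<rho> / 2)^2" by (rule W0)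
    also have "\<dots> = m * (N t1)^2" by (subst t1b(3)) (rule refl)
    also have "\<dots> \<le> W t1" by (rule Wlow)
    finally show False by simp
  qed
  show ?thesis
  proof (intro allI impI conjI)
    fix t :: real assume t: "t \<ge> 0"
    show "norm (x t - (rd, pi/2)) < \<rho> / 2" using stay[OF t] by (simp add: N_def p_def)
    have Wt: "W t \<le> W 0 * exp (- \<beta> * t)"
      by (rule decay[OF t]) (use stay \<rho> in force)
    have "W 0 * exp (- \<beta> * t) \<le> Mw * (N 0)^2 * exp (- \<beta> * t)"
      using Wup[of 0] by (rule mult_right_mono) simp
    then have "m * (N t)^2 \<le> Mw * (N 0)^2 * exp (- \<beta> * t)"
      using Wlow[of t] Wt by linarith
    then have "(N t)^2 \<le> (Mw / m) * (N 0)^2 * exp (- \<beta> * t)"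
      using m0 by (simp add: field_simps)
    also have "\<dots> \<le> (Mw / m)^2 * (N 0)^2 * exp (- \<beta> * t)"
    proof -
      have "Mw / m \<ge> 1" using mMw m0 by simp
      then have "Mw / m * 1 \<le> Mw / m * (Mw / m)" by (intro mult_left_mono) auto
      then have "Mw / m \<le> (Mw / m)^2" by (simp only: power2_eq_square mult_1_right)
      then show ?thesis by (intro mult_right_mono) auto
    qed
    also have "\<dots> = ((Mw / m) * N 0 * exp (- (k * V / 4) * t))^2"
    proof -
      have "exp (- \<beta> * t) = (exp (- (k * V / 4) * t))^2"
        by (simp add: \<beta>_def power2_eq_square exp_add[symmetric])
      then show ?thesis by (simp add: power_mult_distrib power_divide)
    qed
    finally have "N t \<le> (Mw / m) * N 0 * exp (- (k * V / 4) * t)"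
      by (rule power2_le_imp_le) (use m0 mMw N0[of 0] in simp)
    then show "norm (x t - (rd, pi/2)) \<le> ((k^2 + k + 1) / (min (k^2) 1 / 2)) * norm (x 0 - (rd, pi/2)) * exp (- (k * V / 4) * t)"
      by (simp add: N_def p_def Mw_def m_def)
  qed
qed

end


theorem theorem2:
  fixes V rd k ra :: real
  assumes "V > 0" and "rd > 0" and "k > 1 / rd"
    and "ra = sqrt (rd\<^sup>2 - 1 / k\<^sup>2)"
  shows "loc_exp_stable_eq (cl_field V k ra) (rd, pi / 2)"
proof -
  let ?f = "cl_field V k ra"
  let ?p = "(rd, pi / 2) :: real \<times> real"
  have k0: "k > 0" by (rule k0[OF assms])
  have V: "V > 0" by fact
  have eq: "?f ?p = 0"
  proof -
    have "ra < rd" by (rule ra_lt[OF assms])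
    then have "?f ?p = (- V * cos (pi/2), (V * sin (pi/2) - k * V * sqrt (rd^2 - ra^2)) / rd + k * V * cos (pi/2))"
      by (rule field_eq[OF assms])
    then show ?thesis using k0 by (simp add: u_rd[OF assms] zero_prod_def)
  qed
  obtain \<rho> where \<rho>: "\<rho> > 0" "\<rho> \<le> rho0 rd ra" and lyap: "\<forall>z\<in>cball (rd, pi/2) \<rho>.
     (2 * k^2 * (fst z - rd) + k * (snd z - pi/2)) * fst (cl_field V k ra z)
     + (k * (fst z - rd) + 2 * (snd z - pi/2)) * snd (cl_field V k ra z)
     \<le> - (k * V / 2) * (k^2 * (fst z - rd)^2 + k * (fst z - rd) * (snd z - pi/2) + (snd z - pi/2)^2)"
    using lyap_exists[OF assms] by blast
  obtain L where L0: "L > 0" and L: "\<forall>x\<in>cball (rd, pi/2) (rho0 rd ra). \<forall>y\<in>cball (rd, pi/2) (rho0 rd ra).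
      norm (?f x - ?f y) \<le> L * norm (x - y)"
    using lip_exists[OF assms] by blast
  define \<delta> where "\<delta> = \<rho> * (min (k^2) 1 / 2) / (2 * (k^2 + k + 1))"
  define c where "c = (k^2 + k + 1) / (min (k^2) 1 / 2)"
  define lam where "lam = k * V / 4"
  have \<delta>0: "\<delta> > 0" using \<rho> k0 by (simp add: \<delta>_def add_pos_pos)
  have c0: "c > 0" using k0 by (simp add: c_def add_pos_pos)
  have lam0: "lam > 0" using k0 V by (simp add: lam_def)
  define S where "S = cball ?p \<rho>"
  have S: "convex S" "closed S" "S \<noteq> {}" using \<rho> by (auto simp: S_def)
  have Ssub: "S \<subseteq> cball ?p (rho0 rd ra)" using \<rho> by (auto simp: S_def)
  define G where "G z = ?f (closest_point S z)" for z
  have cpS: "closest_point S z \<in> S" for z by (rule closest_point_in_set[OF S(2,3)])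
  have GL: "norm (G z - G w) \<le> L * norm (z - w)" for z w
  proof -
    have "norm (G z - G w) \<le> L * norm (closest_point S z - closest_point S w)"
      unfolding G_def using L cpS Ssub by blast
    also have "\<dots> \<le> L * norm (z - w)"
      using closest_point_lipschitz[OF S, of z w] L0 by (simp add: dist_norm mult_left_mono)
    finally show ?thesis .
  qed
  have GM: "norm (G z) \<le> L * \<rho>" for z
  proof -
    have pS: "?p \<in> S" using \<rho> by (simp add: S_def)
    have "norm (G z) = norm (?f (closest_point S z) - ?f ?p)" using eq by (simp add: G_def)
    also have "\<dots> \<le> L * norm (closest_point S z - ?p)" using L cpS Ssub pS by blast
    also have "\<dots> \<le> L * \<rho>"
      using cpS[of z] L0 by (intro mult_left_mono) (auto simp: S_def dist_norm norm_minus_commute)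
    finally show ?thesis .
  qed
  have GS: "G z = ?f z" if "z \<in> S" for z using that by (simp add: G_def closest_point_self)
  have main: "(\<exists>x. x 0 = x0 \<and> ode_solution ?f x {0..}) \<and>
        (\<forall>x. x 0 = x0 \<and> ode_solution ?f x {0..} \<longrightarrow>
           (\<forall>t\<ge>0. norm (x t - ?p) \<le> c * norm (x0 - ?p) * exp (- lam * t)))"
    if x0: "norm (x0 - ?p) < \<delta>" for x0
  proof
    obtain X where X0: "X 0 = x0" and Xd: "\<forall>t\<in>{0..}. (X has_vector_derivative G (X t)) (at t within {0..})"
      using picard[OF L0 GL GM] by blast
    have solG: "ode_solution G X {0..}" using Xd by (simp add: ode_solution_def)
    have st: "\<forall>t\<ge>0. norm (X t - ?p) < \<rho> / 2 \<and> norm (X t - ?p) \<le> c * norm (X 0 - ?p) * exp (- (k * V / 4) * t)"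
      using stab[OF assms \<rho>(1) lyap _ solG] GS x0 X0 unfolding S_def c_def \<delta>_def by auto
    have "ode_solution ?f X {0..}"
      unfolding ode_solution_def
    proof
      fix t :: real assume t: "t \<in> {0..}"
      have "X t \<in> S" using st t \<rho> by (auto simp: S_def dist_norm norm_minus_commute)
      then have "G (X t) = ?f (X t)" by (rule GS)
      then show "(X has_vector_derivative ?f (X t)) (at t within {0..})"
        using Xd t by metis
    qed
    then show "\<exists>x. x 0 = x0 \<and> ode_solution ?f x {0..}" using X0 by blast
  next
    show "\<forall>x. x 0 = x0 \<and> ode_solution ?f x {0..} \<longrightarrow>
           (\<forall>t\<ge>0. norm (x t - ?p) \<le> c * norm (x0 - ?p) * exp (- lam * t))"
    proof (intro allI impI)
      fix x :: "real \<Rightarrow> real \<times> real" and t :: real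
      assume h: "x 0 = x0 \<and> ode_solution ?f x {0..}" and t: "t \<ge> 0"
      have "\<forall>t\<ge>0. norm (x t - ?p) < \<rho> / 2 \<and> norm (x t - ?p) \<le> c * norm (x 0 - ?p) * exp (- (k * V / 4) * t)"
        using stab[OF assms \<rho>(1) lyap _ conjunct2[OF h]] x0 h unfolding c_def \<delta>_def by auto
      then show "norm (x t - ?p) \<le> c * norm (x0 - ?p) * exp (- lam * t)"
        using t h by (simp add: lam_def)
    qed
  qed
  show ?thesis
    unfolding loc_exp_stable_eq_def
    using eq \<delta>0 c0 lam0 main by blast
qed

end
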